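(* Let $G_1=(V,D_1,B_1)$ and $G_2=(V,D_2,B_2)$ be simple mixed graphs with the same skeleton and the same collider triples, and let $(\Lambda_i,\Omega_i)\in\mathbb{R}^{D_i}\times\mathit{PD}(B_i)$ for $i=1,2$. If $(\Lambda_2,\Omega_2^{od})$ equals the edge labeling on $G_2$ induced by $(\Lambda_1,\Omega_1)$, then $\det(I-\Lambda_1)=\det(I-\Lambda_2)$. In particular, if $\Lambda_1\in\mathbb{R}^{D_1}_{\mathrm{reg}}$ then $\Lambda_2\in\mathbb{R}^{D_2}_{\mathrm{reg}}$.
   Context: A mixed graph with finite vertex set $V$ is a triple $G=(V,D,B)$ with $D$ a set of ordered pairs $(i,j)$, $i\ne j$ (directed edges $i\to j$, head $j$) and $B$ a set of unordered pairs $\{i,j\}$, $i\ne j$ (bidirected edges $i\leftrightarrow j$, both endpoints heads). It is simple if any two distinct nodes are joined by at most one edge. The skeleton is the undirected graph obtained by replacing all edges by undirected ones. A collider triple is a triple $(i,j,k)$ with an edge between $i$ and $j$ and an edge between $j$ and $k$, $j$ being a head on both (regardless of adjacency of $i,k$). $\mathbb{R}^D$ is the set of real $V\times V$ matrices $\Lambda$ with $\lambda_{ij}=0$ for $(i,j)\notin D$, $\mathbb{R}^D_{\mathrm{reg}}$ those with $I-\Lambda$ invertible; $\mathit{PD}(B)$ is the set of positive definite symmetric matrices $\Omega$ with $\omega_{ij}=0$ for $i\neq j$, $\{i,j\}\notin B$. For a matrix $\Omega$, $\Omega^{od}$ denotes its off-diagonal part ($\Omega=\Omega^d+\Omega^{od}$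 with $\Omega^d$ diagonal). For simple $G_1,G_2$ with the same skeleton and $(\Lambda_1,\Omega_1)$ for $G_1$, the induced edge labeling on $G_2$ is the pair $(\Lambda_2,\Omega_2^{od})$ with $(\Lambda_2)_{ij}=(\Lambda_1)_{ij}$ if $i\to j\in G_1$ and $i\to j\in G_2$; $=(\Lambda_1)_{ji}$ if $j\to i\in G_1$ and $i\to j\in G_2$; $=(\Omega_1)_{ij}$ if $i\leftrightarrow j\in G_1$ and $i\to j\in G_2$; $=0$ if $i\to j\notin G_2$; and $(\Omega_2^{od})_{ij}=(\Lambda_1)_{ij}$ if $i\to j\in G_1$ and $i\leftrightarrow j\in G_2$; $=(\Lambda_1)_{ji}$ if $j\to i\in G_1$ and $i\leftrightarrow j\in G_2$; $=(\Omega_1)_{ij}$ if $i\leftrightarrow j\in G_1$ and $i\leftrightarrow j\in G_2$; $=0$ if $i\leftrightarrow j\notin G_2$ or $i=j$. *)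

theory Defs
  imports "HOL-Analysis.Analysis"
begin

text \<open>Vertex set V is the finite type 'n (V = UNIV). A mixed graph is given by
  D :: ('n \<times> 'n) set (directed edges i \<rightarrow> j as (i,j)) and
  B :: 'n set set (bidirected edges as unordered pairs {i,j}).\<close>

definition mixed_graph :: "('n \<times> 'n) set \<Rightarrow> 'n set set \<Rightarrow> bool" where
  "mixed_graph D B \<longleftrightarrow> (\<forall>(i,j)\<in>D. i \<noteq> j) \<and> (\<forall>e\<in>B. \<exists>i j. i \<noteq> j \<and> e = {i,j})"

definition simple_mixed_graph :: "('n \<times> 'n) set \<Rightarrow> 'n set set \<Rightarrow> bool" where
  "simple_mixed_graph D B \<longleftrightarrow> mixed_graph D B \<and>
     (\<forall>i j. i \<noteq> j \<longrightarrow> \<not> ((i,j) \<in> D \<and> (j,i) \<in> D) \<and> \<not> ((i,j) \<in> D \<and> {i,j} \<in> B))"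

definition skeleton :: "('n \<times> 'n) set \<Rightarrow> 'n set set \<Rightarrow> 'n set set" where
  "skeleton D B = {{i,j} | i j. (i,j) \<in> D} \<union> B"

definition head_edge :: "('n \<times> 'n) set \<Rightarrow> 'n set set \<Rightarrow> 'n \<Rightarrow> 'n \<Rightarrow> bool" where
  "head_edge D B i j \<longleftrightarrow> (i,j) \<in> D \<or> {i,j} \<in> B"

definition collider_triples :: "('n \<times> 'n) set \<Rightarrow> 'n set set \<Rightarrow> ('n \<times> 'n \<times> 'n) set" where
  "collider_triples D B = {(i,j,k) | i j k. i \<noteq> k \<and> head_edge D B i j \<and> head_edge D B k j}"

definition supp_D :: "('n::finite \<times> 'n) set \<Rightarrow> (real^'n^'n) set" where
  "supp_D D = {L. \<forall>i j. (i,j) \<notin> D \<longrightarrow> L$i$j = 0}"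

definition pos_def :: "real^'n^'n \<Rightarrow> bool" where
  "pos_def M \<longleftrightarrow> transpose M = M \<and> (\<forall>x. x \<noteq> 0 \<longrightarrow> x \<bullet> (M *v x) > 0)"

definition PD :: "('n::finite) set set \<Rightarrow> (real^'n^'n) set" where
  "PD B = {M. pos_def M \<and> (\<forall>i j. i \<noteq> j \<and> {i,j} \<notin> B \<longrightarrow> M$i$j = 0)}"

definition offdiag :: "real^'n^'n \<Rightarrow> real^'n^'n" where
  "offdiag M = (\<chi> i j. if i = j then 0 else M$i$j)"

definition induced_label :: "('n \<times> 'n) set \<Rightarrow> 'n set set \<Rightarrow> real^'n^'n \<Rightarrow> real^'n^'n \<Rightarrow> 'n \<Rightarrow> 'n \<Rightarrow> real" where
  "induced_label D1 B1 L1 O1 i j =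
     (if (i,j) \<in> D1 then L1$i$j else if (j,i) \<in> D1 then L1$j$i
      else if {i,j} \<in> B1 then O1$i$j else 0)"

definition induced_Lambda :: "('n \<times> 'n) set \<Rightarrow> 'n set set \<Rightarrow> ('n \<times> 'n) set \<Rightarrow> real^'n^'n \<Rightarrow> real^'n^'n \<Rightarrow> real^'n^'n" where
  "induced_Lambda D1 B1 D2 L1 O1 = (\<chi> i j. if (i,j) \<in> D2 then induced_label D1 B1 L1 O1 i j else 0)"

definition induced_Omega_od :: "('n \<times> 'n) set \<Rightarrow> 'n set set \<Rightarrow> 'n set set \<Rightarrow> real^'n^'n \<Rightarrow> real^'n^'n \<Rightarrow> real^'n^'n" where
  "induced_Omega_od D1 B1 B2 L1 O1 = (\<chi> i j. if i \<noteq> j \<and> {i,j} \<in> B2 then induced_label D1 B1 L1 O1 i j else 0)"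

end

theory Submission
  imports Defs
begin

definition good :: "('n \<times> 'n) set \<Rightarrow> ('n \<Rightarrow> 'n) \<Rightarrow> bool" where
  "good D p \<longleftrightarrow> p permutes UNIV \<and> (\<forall>i. p i \<noteq> i \<longrightarrow> (i, p i) \<in> D)"

definition Sset :: "('n \<times> 'n) set \<Rightarrow> ('n \<Rightarrow> 'n) \<Rightarrow> 'n set" where
  "Sset D p = {i. p i \<noteq> i \<and> (i, p i) \<in> D}"

definition Tset :: "('n \<times> 'n) set \<Rightarrow> ('n \<Rightarrow> 'n) \<Rightarrow> 'n set" where
  "Tset D p = {i. p i \<noteq> i \<and> (i, inv p i) \<in> D}"

definition restr :: "('n \<Rightarrow> 'n) \<Rightarrow> 'n set \<Rightarrow> 'n \<Rightarrow> 'n" where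
  "restr p X = (\<lambda>i. if i \<in> X then p i else i)"

definition sig :: "('n \<times> 'n) set \<Rightarrow> ('n \<Rightarrow> 'n) \<Rightarrow> 'n \<Rightarrow> 'n" where
  "sig D p = (\<lambda>i. if i \<in> Tset D p then inv p i else i)"

definition Phi :: "('n \<times> 'n) set \<Rightarrow> ('n \<Rightarrow> 'n) \<Rightarrow> 'n \<Rightarrow> 'n" where
  "Phi D p = restr p (Sset D p) \<circ> sig D p"

lemma perm_bij: "p permutes (UNIV::'n set) \<longleftrightarrow> bij p"
  by (simp add: permutes_univ bij_iff)

lemma restr_bij:
  fixes p :: "'n::finite \<Rightarrow> 'n"
  assumes "bij p" "p ` X = X"
  shows "bij (restr p X)"
proof -
  have "inj (restr p X)"
  proof (rule injI)
    fix x y assume e: "restr p X x = restr p X y"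
    have inj: "inj p" using assms bij_is_inj by blast
    show "x = y"
    proof (cases "x \<in> X"; cases "y \<in> X")
      assume "x \<in> X" "y \<in> X" then show ?thesis using e inj by (auto simp: restr_def inj_def)
    next
      assume "x \<in> X" "y \<notin> X" then show ?thesis using e assms(2) by (auto simp: restr_def)
    next
      assume "x \<notin> X" "y \<in> X" then show ?thesis using e assms(2) by (auto simp: restr_def)
    next
      assume "x \<notin> X" "y \<notin> X" then show ?thesis using e by (auto simp: restr_def)
    qed
  qed
  then show ?thesis using finite_UNIV_inj_surj[of "restr p X"] by (simp add: bij_def)
qed

lemma perm_fin: "bij (p::'n::finite \<Rightarrow> 'n) \<Longrightarrow> permutation p"
proof -
  assume "bij p"
  then have "p permutes UNIV" by (simp add: perm_bij)
  then show "permutation p" unfolding permutation_permutes using finite by blast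
qed

locale gpair =
  fixes D1 D2 :: "('n::finite \<times> 'n) set" and B1 B2 :: "'n set set"
  assumes s1: "simple_mixed_graph D1 B1" and s2: "simple_mixed_graph D2 B2"
    and sk: "skeleton D1 B1 = skeleton D2 B2"
    and ct: "collider_triples D1 B1 = collider_triples D2 B2"
begin

lemma D1_irr: "(i, i) \<notin> D1" using s1 by (auto simp: simple_mixed_graph_def mixed_graph_def)
lemma D2_irr: "(i, i) \<notin> D2" using s2 by (auto simp: simple_mixed_graph_def mixed_graph_def)
lemma D1_as: assumes "(i, j) \<in> D1" shows "(j, i) \<notin> D1"
proof -
  have "i \<noteq> j" using assms D1_irr by blast
  then show ?thesis using s1 assms unfolding simple_mixed_graph_def by blast
qed
lemma D2_as: assumes "(i, j) \<in> D2" shows "(j, i) \<notin> D2"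
proof -
  have "i \<noteq> j" using assms D2_irr by blast
  then show ?thesis using s2 assms unfolding simple_mixed_graph_def by blast
qed
lemma D1_B1: assumes "(i, j) \<in> D1" shows "{j, i} \<notin> B1"
proof -
  have "i \<noteq> j" using assms D1_irr by blast
  then show ?thesis using s1 assms unfolding simple_mixed_graph_def by (metis insert_commute)
qed

lemma edge2: assumes "(x, y) \<in> D1" shows "(x,y) \<in> D2 \<or> (y,x) \<in> D2 \<or> {x,y} \<in> B2"
proof -
  have "{x,y} \<in> {{i,j} | i j. (i,j) \<in> D1}" using assms by blast
  then have "{x,y} \<in> skeleton D1 B1" by (simp add: skeleton_def)
  then have "{x,y} \<in> skeleton D2 B2" using sk by simp
  then have "{x,y} \<in> B2 \<or> (\<exists>i j. {x,y} = {i,j} \<and> (i,j) \<in> D2)" by (auto simp: skeleton_def)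
  then show ?thesis by (auto simp: doubleton_eq_iff)
qed

lemma nohead: assumes "(x, y) \<in> D1" "\<not> head_edge D2 B2 x y" shows "(y, x) \<in> D2"
  using edge2[OF assms(1)] assms(2) by (auto simp: head_edge_def)

lemma nohead': assumes "(x, y) \<in> D1" "\<not> head_edge D2 B2 y x" shows "(x, y) \<in> D2"
  using edge2[OF assms(1)] assms(2) by (auto simp: head_edge_def insert_commute)

context
  fixes p :: "'n \<Rightarrow> 'n"
  assumes gp: "good D1 p"
begin

lemma bp: "bij p" using gp by (simp add: good_def perm_bij)
lemma pinv[simp]: "p (inv p i) = i" using bp by (simp add: bij_is_surj surj_f_inv_f)
lemma invp[simp]: "inv p (p i) = i" using bp by (simp add: bij_is_inj)
lemma arc: "p i \<noteq> i \<Longrightarrow> (i, p i) \<in> D1" using gp by (simp add: good_def)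
lemma pfix: "p (p i) = p i \<longleftrightarrow> p i = i" using bp by (metis bij_is_inj injD)
lemma ifix: "inv p i = i \<longleftrightarrow> p i = i" by (metis pinv invp)

lemma no2: assumes "p i \<noteq> i" shows "p (p i) \<noteq> i"
proof
  assume "p (p i) = i"
  then have "(p i, i) \<in> D1" using arc[of "p i"] assms pfix by auto
  then show False using arc[OF assms] D1_as by blast
qed

lemma nodbl: assumes "p j \<noteq> j" "head_edge D2 B2 (inv p j) j" "head_edge D2 B2 (p j) j"
  shows False
proof -
  have "inv p j \<noteq> p j"
  proof
    assume "inv p j = p j"
    then have "p (p j) = j" by (metis pinv)
    then show False using no2 assms(1) by blast
  qed
  then have "(inv p j, j, p j) \<in> collider_triples D2 B2" using assms by (auto simp: collider_triples_def)
  then have "(inv p j, j, p j) \<in> collider_triples D1 B1" using ct by simp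
  then have "head_edge D1 B1 (p j) j" by (auto simp: collider_triples_def)
  then show False using arc[OF assms(1)] D1_as D1_B1 by (auto simp: head_edge_def)
qed

abbreviation "S \<equiv> Sset D2 p"
abbreviation "T \<equiv> Tset D2 p"

lemma Sstep: "i \<in> S \<Longrightarrow> p i \<in> S"
proof -
  assume i: "i \<in> S"
  let ?j = "p i"
  have nf: "p ?j \<noteq> ?j" using i pfix by (auto simp: Sset_def)
  have "head_edge D2 B2 (inv p ?j) ?j" using i by (auto simp: Sset_def head_edge_def)
  then have "\<not> head_edge D2 B2 (p ?j) ?j" using nodbl[OF nf] by blast
  then have "(?j, p ?j) \<in> D2" using nohead'[OF arc[OF nf]] by blast
  then show ?thesis using nf by (simp add: Sset_def)
qed

lemma Tstep: "j \<in> T \<Longrightarrow> inv p j \<in> T"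
proof -
  assume j: "j \<in> T"
  let ?k = "inv p j"
  have nf: "p ?k \<noteq> ?k" using j by (auto simp: Tset_def ifix D2_irr)
  have "head_edge D2 B2 (p ?k) ?k" using j by (auto simp: Tset_def head_edge_def)
  then have "\<not> head_edge D2 B2 (inv p ?k) ?k" using nodbl[OF nf] by blast
  moreover have "p (inv p ?k) \<noteq> inv p ?k" using nf by (metis pinv)
  then have "(inv p ?k, p (inv p ?k)) \<in> D1" by (rule arc)
  then have "(inv p ?k, ?k) \<in> D1" by simp
  ultimately have "(?k, inv p ?k) \<in> D2" using nohead by blast
  moreover have "j \<noteq> inv p j" using nf by (metis pinv)
  ultimately show ?thesis using nf by (simp add: Tset_def)
qed

lemma Sinv: "p ` S = S"
proof -
  have "p ` S \<subseteq> S" using Sstep by blast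
  moreover have "inj_on p S" using bij_is_inj[OF bp] by (simp add: inj_on_def)
  ultimately show ?thesis using endo_inj_surj[of S p] by simp
qed

lemma Tinv: "p ` T = T"
proof -
  have "inv p ` T \<subseteq> T" using Tstep by blast
  moreover have "inj_on (inv p) T" using bij_is_inj[OF bij_imp_bij_inv[OF bp]] by (simp add: inj_on_def)
  ultimately have "inv p ` T = T" using endo_inj_surj[of T "inv p"] by simp
  then have "p ` inv p ` T = p ` T" by simp
  moreover have "p ` inv p ` T = T" by (simp add: image_comp)
  ultimately show ?thesis by simp
qed

lemma S_back: "i \<in> S \<Longrightarrow> inv p i \<in> S"
proof -
  assume "i \<in> S"
  then obtain k where "k \<in> S" "i = p k" using Sinv by blast
  then show ?thesis by simp
qed

lemma T_fwd: "i \<in> T \<Longrightarrow> p i \<in> T" using Tinv by blast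

lemma cover: "p i \<noteq> i \<Longrightarrow> i \<in> S \<or> i \<in> T"
proof -
  assume nf: "p i \<noteq> i"
  show ?thesis
  proof (cases "i \<in> S")
    case False
    then have "(i, p i) \<notin> D2" using nf by (simp add: Sset_def)
    then have "head_edge D2 B2 (p i) i" using edge2[OF arc[OF nf]]
      by (auto simp: head_edge_def insert_commute)
    then have "\<not> head_edge D2 B2 (inv p i) i" using nodbl[OF nf] by blast
    moreover have "p (inv p i) \<noteq> inv p i" using nf by (metis pinv)
    then have "(inv p i, p (inv p i)) \<in> D1" by (rule arc)
    then have "(inv p i, i) \<in> D1" by simp
    ultimately have "(i, inv p i) \<in> D2" using nohead by blast
    moreover have "i \<noteq> inv p i" using nf by (metis pinv)
    ultimately show ?thesis using nf by (simp add: Tset_def)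
  qed simp
qed

lemma disj: "i \<in> S \<Longrightarrow> i \<notin> T"
proof
  assume "i \<in> S" "i \<in> T"
  then have "inv p i \<in> S" using S_back by blast
  then have "(inv p i, i) \<in> D2" by (simp add: Sset_def)
  then show False using \<open>i \<in> T\<close> D2_as by (auto simp: Tset_def)
qed

lemma sig_eq: "sig D2 p = inv (restr p T)"
proof -
  have b: "bij (restr p T)" using restr_bij bp Tinv by blast
  have "restr p T (sig D2 p i) = i" for i
    using Tstep[of i] by (auto simp: restr_def sig_def)
  then show ?thesis using b by (metis bij_inv_eq_iff ext)
qed

lemma p_decomp: "p = restr p S \<circ> restr p T"
proof
  fix i
  show "p i = (restr p S \<circ> restr p T) i"
    using cover[of i] disj[of i] disj[of "p i"] T_fwd[of i]
    by (auto simp: restr_def)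
qed

lemma bS: "bij (restr p S)" using restr_bij bp Sinv by blast
lemma bT: "bij (restr p T)" using restr_bij bp Tinv by blast
lemma bsig: "bij (sig D2 p)" using bT sig_eq bij_imp_bij_inv by metis
lemma bq: "bij (Phi D2 p)" unfolding Phi_def using bS bsig bij_comp by blast

lemma sign_Phi: "sign (Phi D2 p) = sign p"
proof -
  have "sign (Phi D2 p) = sign (restr p S) * sign (inv (restr p T))"
    unfolding Phi_def sig_eq by (rule sign_compose) (use bS bT perm_fin bij_imp_bij_inv in auto)
  also have "\<dots> = sign (restr p S) * sign (restr p T)"
    using sign_inverse perm_fin bT by metis
  also have "\<dots> = sign p"
    by (subst (3) p_decomp, rule sign_compose[symmetric]) (use bS bT perm_fin in auto)
  finally show ?thesis .
qed

lemma Phi_val: "Phi D2 p i = (if i \<in> S then p i else if i \<in> T then inv p i else i)"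
  using disj[of i] disj[of "inv p i"] Tstep[of i]
  by (auto simp: Phi_def restr_def sig_def)

lemma Phi_good: "good D2 (Phi D2 p)"
  unfolding good_def perm_bij using bq
  by (auto simp: Phi_val Sset_def Tset_def)

lemma Phi_recover:
  "p i = (let q = Phi D2 p in if q i = i then i else if (i, q i) \<in> D1 then q i else inv q i)"
proof -
  have bq': "inj (Phi D2 p)" using bq bij_is_inj by blast
  show ?thesis
  proof (cases "p i = i")
    case True then show ?thesis using disj by (auto simp: Phi_val Sset_def Tset_def)
  next
    case False
    then consider "i \<in> S" | "i \<in> T" "i \<notin> S" using cover disj by blast
    then show ?thesis
    proof cases
      case 1 then show ?thesis using arc by (auto simp: Phi_val Sset_def)
    next
      case 2
      have a: "(inv p i, i) \<in> D1" using arc[of "inv p i"] False by (metis ifix pinv)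
      have qi: "Phi D2 p i = inv p i" using 2 by (simp add: Phi_val)
      have "p i \<notin> S" using disj[of "p i"] T_fwd[of i] 2 by blast
      then have "Phi D2 p (p i) = i" using 2 T_fwd[of i] by (simp add: Phi_val)
      then have "inv (Phi D2 p) i = p i" using bq' by (metis inv_f_f)
      then show ?thesis using qi a D1_as False by (auto simp: ifix)
    qed
  qed
qed

lemma entry_eq:
  assumes L1: "L1 \<in> supp_D D1" and L2: "L2 = induced_Lambda D1 B1 D2 L1 O1"
  shows "(mat 1 - L2) $ i $ (Phi D2 p i) = (mat 1 - L1) $ (sig D2 p i) $ (p (sig D2 p i))"
proof -
  have d: "\<And>L::real^'n^'n. \<And>a b. (mat 1 - L) $ a $ b = (if a = b then 1 else 0) - L $ a $ b"
    by (simp add: mat_def)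
  show ?thesis
  proof (cases "i \<in> S")
    case True
    then have "i \<notin> T" using disj by blast
    then show ?thesis using True arc[of i]
      by (simp add: Phi_val sig_def d L2 induced_Lambda_def induced_label_def Sset_def)
  next
    case F: False
    show ?thesis
    proof (cases "i \<in> T")
      case True
      let ?k = "inv p i"
      have nf: "p i \<noteq> i" using True by (simp add: Tset_def)
      have a: "(?k, i) \<in> D1" using arc[of ?k] nf by (metis pinv)
      have na: "(i, ?k) \<notin> D1" using D1_as a by blast
      have ne: "i \<noteq> ?k" using nf by (metis pinv)
      have e2: "(i, ?k) \<in> D2" using True by (simp add: Tset_def)
      show ?thesis using True F a na ne not_sym[OF ne] e2
        by (simp add: Phi_val sig_def mat_def L2 induced_Lambda_def induced_label_def)
    next
      case False
      then have "p i = i" using F cover by blast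
      moreover have "L1 $ i $ i = 0" using L1 D1_irr by (simp add: supp_D_def)
      ultimately show ?thesis using F False D2_irr
        by (simp add: Phi_val sig_def d L2 induced_Lambda_def)
    qed
  qed
qed

lemma prod_eq:
  assumes L1: "L1 \<in> supp_D D1" and L2: "L2 = induced_Lambda D1 B1 D2 L1 O1"
  shows "(\<Prod>i\<in>UNIV. (mat 1 - L2) $ i $ (Phi D2 p i)) = (\<Prod>i\<in>UNIV. (mat 1 - L1) $ i $ (p i))"
proof -
  have "sig D2 p permutes UNIV" using bsig perm_bij by blast
  then have "(\<Prod>i\<in>UNIV. (mat 1 - L1) $ i $ (p i)) = prod ((\<lambda>i. (mat 1 - L1) $ i $ (p i)) \<circ> sig D2 p) UNIV"
    by (rule prod.permute)
  also have "\<dots> = (\<Prod>i\<in>UNIV. (mat 1 - L2) $ i $ (Phi D2 p i))"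
    using entry_eq[OF L1 L2] by simp
  finally show ?thesis by simp
qed

end

lemma Phi_inj: "inj_on (Phi D2) {p. good D1 p}"
proof (rule inj_onI)
  fix p1 p2 assume g: "p1 \<in> {p. good D1 p}" "p2 \<in> {p. good D1 p}" and e: "Phi D2 p1 = Phi D2 p2"
  show "p1 = p2"
  proof
    fix i
    show "p1 i = p2 i" using Phi_recover[of p1 i] Phi_recover[of p2 i] g e by simp
  qed
qed

lemma Phi_into: "Phi D2 ` {p. good D1 p} \<subseteq> {p. good D2 p}"
  using Phi_good by blast

end

lemma gpair_sym: "gpair D1 D2 B1 B2 \<Longrightarrow> gpair D2 D1 B2 B1"
  by (simp add: gpair_def)

lemma fin_perms: "finite {p :: 'n::finite \<Rightarrow> 'n. P p}"
  by simp

lemma Phi_onto: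
  assumes "gpair D1 D2 B1 B2"
  shows "Phi D2 ` {p. good D1 p} = {p. good D2 p}"
proof -
  interpret g12: gpair D1 D2 B1 B2 by fact
  interpret g21: gpair D2 D1 B2 B1 using assms gpair_sym by blast
  have c1: "card {p. good D1 p} \<le> card {p. good D2 p}"
    using card_inj_on_le[OF g12.Phi_inj g12.Phi_into] by simp
  have c2: "card {p. good D2 p} \<le> card {p. good D1 p}"
    using card_inj_on_le[OF g21.Phi_inj g21.Phi_into] by simp
  have "card (Phi D2 ` {p. good D1 p}) = card {p. good D2 p}"
    using card_image[OF g12.Phi_inj] c1 c2 by simp
  then show ?thesis using card_subset_eq[OF _ g12.Phi_into] by simp
qed

lemma det_good:
  assumes "L \<in> supp_D D"
  shows "det (mat 1 - L) = (\<Sum>p\<in>{p. good D p}. of_int (sign p) * (\<Prod>i\<in>UNIV. (mat 1 - L) $ i $ p i))"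
  unfolding det_def
proof (rule sum.mono_neutral_right)
  show "finite {p. p permutes (UNIV::'a set)}" by simp
  show "{p. good D p} \<subseteq> {p. p permutes UNIV}" by (auto simp: good_def)
  show "\<forall>p\<in>{p. p permutes UNIV} - {p. good D p}. of_int (sign p) * (\<Prod>i\<in>UNIV. (mat 1 - L) $ i $ p i) = 0"
  proof
    fix p assume "p \<in> {p. p permutes UNIV} - {p. good D p}"
    then obtain i where "p i \<noteq> i" "(i, p i) \<notin> D" by (auto simp: good_def)
    then have "(mat 1 - L) $ i $ p i = 0" using assms by (simp add: supp_D_def mat_def)
    then have "(\<Prod>i\<in>UNIV. (mat 1 - L) $ i $ p i) = 0" by (meson UNIV_I finite prod_zero)
    then show "of_int (sign p) * (\<Prod>i\<in>UNIV. (mat 1 - L) $ i $ p i) = 0" by simp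
  qed
qed

theorem lemma4:
  fixes D1 D2 :: "('n::finite \<times> 'n) set" and B1 B2 :: "'n set set"
    and L1 L2 O1 O2 :: "real^'n^'n"
  assumes "simple_mixed_graph D1 B1" and "simple_mixed_graph D2 B2"
    and "skeleton D1 B1 = skeleton D2 B2"
    and "collider_triples D1 B1 = collider_triples D2 B2"
    and "L1 \<in> supp_D D1" and "O1 \<in> PD B1"
    and "L2 \<in> supp_D D2" and "O2 \<in> PD B2"
    and "L2 = induced_Lambda D1 B1 D2 L1 O1"
    and "offdiag O2 = induced_Omega_od D1 B1 B2 L1 O1"
  shows "det (mat 1 - L1) = det (mat 1 - L2)
         \<and> (invertible (mat 1 - L1) \<longrightarrow> invertible (mat 1 - L2))"
proof -
  have g: "gpair D1 D2 B1 B2" using assms(1-4) by (simp add: gpair_def)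
  interpret gpair D1 D2 B1 B2 by (rule g)
  have "det (mat 1 - L2) = (\<Sum>q\<in>Phi D2 ` {p. good D1 p}. of_int (sign q) * (\<Prod>i\<in>UNIV. (mat 1 - L2) $ i $ q i))"
    using det_good[OF assms(7)] Phi_onto[OF g] by simp
  also have "\<dots> = (\<Sum>p\<in>{p. good D1 p}. of_int (sign (Phi D2 p)) * (\<Prod>i\<in>UNIV. (mat 1 - L2) $ i $ Phi D2 p i))"
    by (subst sum.reindex[OF Phi_inj]) simp
  also have "\<dots> = (\<Sum>p\<in>{p. good D1 p}. of_int (sign p) * (\<Prod>i\<in>UNIV. (mat 1 - L1) $ i $ p i))"
  proof (rule sum.cong[OF refl])
    fix p assume "p \<in> {p. good D1 p}"
    then have gp: "good D1 p" by simp
    show "of_int (sign (Phi D2 p)) * (\<Prod>i\<in>UNIV. (mat 1 - L2) $ i $ Phi D2 p i)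
      = of_int (sign p) * (\<Prod>i\<in>UNIV. (mat 1 - L1) $ i $ p i)"
      using sign_Phi[OF gp] prod_eq[OF gp assms(5) assms(9)] by simp
  qed
  also have "\<dots> = det (mat 1 - L1)" using det_good[OF assms(5)] by simp
  finally have d: "det (mat 1 - L1) = det (mat 1 - L2)" by simp
  then show ?thesis by (simp add: invertible_det_nz)
qed

end
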